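(* Let $M$ be a $\mathtt{dBang}$ term. If $M$ is meaningful, then $\mathrm{nf}(\mathcal T(M))\neq\emptyset$.
   Context: \textbf{dBang.} Terms: $M,N ::= x \mid \lambda x.M \mid MN \mid M[N/x] \mid\ !M \mid \mathrm{der}\,M$ ($M[N/x]$ explicit substitution binding $x$); $M\{N/x\}$ capture-avoiding substitution. List contexts $L ::= \square\mid L[N/x]$. Root rules: $L\langle\lambda x.M\rangle N \mapsto L\langle M[N/x]\rangle$; $M[L\langle !N\rangle/x]\mapsto L\langle M\{N/x\}\rangle$; $\mathrm{der}(L\langle !N\rangle)\mapsto L\langle N\rangle$. Surface contexts $S ::= \square\mid\lambda x.S\mid SM\mid MS\mid S[M/x]\mid M[S/x]\mid\mathrm{der}\,S$; $\to_S$ is the closure of the root rules under surface contexts. Testing contexts: $T ::= \square\mid T N\mid(\lambda x.T)N$. $M$ is meaningful if there exist a testing context $T$ and a term $P$ with $T\langle M\rangle\to_S^* !P$. \textbf{Resources and Taylor expansion.} Resource terms: $m,n ::= x\mid\lambda x.m\mid mn\mid m[n/x]\mid\mathrm{der}\,m\mid[m_1,\dots,m_k]$ ($k\ge0$ multisets). Resource list contexts $l::=\square\mid l[n/x]$. Resource reduction (target a resource term or the zero symbol $\emptyset$), closed under all contexts: $\mathrm{der}(l\langle[m]\rangle)\to l\langle m\rangle$; $\mathrm{der}(l\langle[m_1,\dots,m_k]\rangle)\to\emptyset$ if $k\ne1$; $l\langle\lambda x.m\rangle n\to l\langle m[n/x]\rangle$; $m[l\langle[n_1,\dots,n_k]\rangle/x]\to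 l\langle m\{n_{\sigma(1)}/x_1,\dots,n_{\sigma(k)}/x_k\}\rangle$ for every permutation $\sigma$ when $x_1,\dots,x_k$ are exactly the free occurrences of $x$ in $m$, and $\to\emptyset$ otherwise. Approximation: $x\sqsubset x$; $\lambda x.m\sqsubset\lambda x.M$ if $m\sqsubset M$; $mn\sqsubset MN$ and $m[n/x]\sqsubset M[N/x]$ if $m\sqsubset M,n\sqsubset N$; $\mathrm{der}\,m\sqsubset\mathrm{der}\,M$ if $m\sqsubset M$; $[m_1,\dots,m_k]\sqsubset\ !M$ for any $k\ge0$ if every $m_i\sqsubset M$. $\mathcal T(M)=\{m\mid m\sqsubset M\}$; $\mathrm{nf}(\mathcal T(M))$ is the set of normal resource terms $p$ with $m\to^*p$ for some $m\in\mathcal T(M)$. *)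

theory Defs
  imports Main "HOL-Library.Multiset"
begin

text \<open>Terms up to alpha-equivalence are represented with de Bruijn indices.
  In \<open>Lam M\<close> index 0 of M is bound; in \<open>ES M N\<close> (the explicit substitution
  M[N/x]) index 0 of M is bound (x), N is outside the binder.\<close>

datatype dterm =
    Var nat
  | Lam dterm
  | App dterm dterm
  | ES dterm dterm
  | Bang dterm
  | Der dterm

primrec dlift :: "nat \<Rightarrow> nat \<Rightarrow> dterm \<Rightarrow> dterm" where
  "dlift k c (Var i) = (if c \<le> i then Var (i + k) else Var i)"
| "dlift k c (Lam M) = Lam (dlift k (Suc c) M)"
| "dlift k c (App M N) = App (dlift k c M) (dlift k c N)"
| "dlift k c (ES M N) = ES (dlift k (Suc c) M) (dlift k c N)"
| "dlift k c (Bang M) = Bang (dlift k c M)"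
| "dlift k c (Der M) = Der (dlift k c M)"

text \<open>Capture-avoiding substitution of N for index d (then the binder is removed):
  \<open>dsubst 0 N M\<close> is \<open>M{N/x}\<close> for M with x bound as index 0.\<close>
primrec dsubst :: "nat \<Rightarrow> dterm \<Rightarrow> dterm \<Rightarrow> dterm" where
  "dsubst d N (Var i) = (if i = d then dlift d 0 N else if d < i then Var (i - 1) else Var i)"
| "dsubst d N (Lam M) = Lam (dsubst (Suc d) N M)"
| "dsubst d N (App M1 M2) = App (dsubst d N M1) (dsubst d N M2)"
| "dsubst d N (ES M1 M2) = ES (dsubst (Suc d) N M1) (dsubst d N M2)"
| "dsubst d N (Bang M) = Bang (dsubst d N M)"
| "dsubst d N (Der M) = Der (dsubst d N M)"

text \<open>List contexts \<open>L ::= \<box> | L[N/x]\<close>, represented by the list of the N's, innermost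
  first: \<open>L[N/x]\<langle>M\<rangle> = L\<langle>M\<rangle>[N/x]\<close>.  Its number of binders is the length of the list.\<close>
definition lplug :: "dterm \<Rightarrow> dterm list \<Rightarrow> dterm" where
  "lplug M Ls = foldl ES M Ls"

inductive root :: "dterm \<Rightarrow> dterm \<Rightarrow> bool" where
  root_dB: "root (App (lplug (Lam M) Ls) N) (lplug (ES M (dlift (length Ls) 0 N)) Ls)"
| root_sb: "root (ES M (lplug (Bang N) Ls)) (lplug (dsubst 0 N (dlift (length Ls) 1 M)) Ls)"
| root_d:  "root (Der (lplug (Bang N) Ls)) (lplug N Ls)"

text \<open>Surface reduction: closure of root under surface contexts
  \<open>S ::= \<box> | \<lambda>x.S | S M | M S | S[M/x] | M[S/x] | der S\<close> (not under !).\<close>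
inductive sstep :: "dterm \<Rightarrow> dterm \<Rightarrow> bool" where
  s_root: "root M M' \<Longrightarrow> sstep M M'"
| s_lam:  "sstep M M' \<Longrightarrow> sstep (Lam M) (Lam M')"
| s_appl: "sstep M M' \<Longrightarrow> sstep (App M N) (App M' N)"
| s_appr: "sstep N N' \<Longrightarrow> sstep (App M N) (App M N')"
| s_esl:  "sstep M M' \<Longrightarrow> sstep (ES M N) (ES M' N)"
| s_esr:  "sstep N N' \<Longrightarrow> sstep (ES M N) (ES M N')"
| s_der:  "sstep M M' \<Longrightarrow> sstep (Der M) (Der M')"

datatype tctx = THole | TApp tctx dterm | TLamApp tctx dterm

text \<open>Plugging into a testing context may capture free variables (as with named
  contexts): the hole term is inserted verbatim under the binders of T.\<close>
primrec tplug :: "tctx \<Rightarrow> dterm \<Rightarrow> dterm" where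
  "tplug THole M = M"
| "tplug (TApp T N) M = App (tplug T M) N"
| "tplug (TLamApp T N) M = App (Lam (tplug T M)) N"

text \<open>Renaming of free variables (used to model which free variables of the named
  term get captured by the binders of the named testing context).\<close>
primrec dren :: "(nat \<Rightarrow> nat) \<Rightarrow> dterm \<Rightarrow> dterm" where
  "dren \<rho> (Var i) = Var (\<rho> i)"
| "dren \<rho> (Lam M) = Lam (dren (case_nat 0 (\<lambda>i. Suc (\<rho> i))) M)"
| "dren \<rho> (App M N) = App (dren \<rho> M) (dren \<rho> N)"
| "dren \<rho> (ES M N) = ES (dren (case_nat 0 (\<lambda>i. Suc (\<rho> i))) M) (dren \<rho> N)"
| "dren \<rho> (Bang M) = Bang (dren \<rho> M)"
| "dren \<rho> (Der M) = Der (dren \<rho> M)"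

text \<open>M is meaningful: some testing context T (with arbitrary, injective choice of
  which free variables of M are captured by T) and P with \<open>T\<langle>M\<rangle> \<rightarrow>\<^sub>S\<^sup>* !P\<close>.\<close>
definition meaningful :: "dterm \<Rightarrow> bool" where
  "meaningful M \<longleftrightarrow> (\<exists>T \<rho> P. inj \<rho> \<and> sstep\<^sup>*\<^sup>* (tplug T (dren \<rho> M)) (Bang P))"

datatype rterm =
    RVar nat
  | RLam rterm
  | RApp rterm rterm
  | RES rterm rterm
  | RDer rterm
  | RBag "rterm multiset"

primrec rlift :: "nat \<Rightarrow> nat \<Rightarrow> rterm \<Rightarrow> rterm" where
  "rlift k c (RVar i) = (if c \<le> i then RVar (i + k) else RVar i)"
| "rlift k c (RLam m) = RLam (rlift k (Suc c) m)"
| "rlift k c (RApp m n) = RApp (rlift k c m) (rlift k c n)"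
| "rlift k c (RES m n) = RES (rlift k (Suc c) m) (rlift k c n)"
| "rlift k c (RDer m) = RDer (rlift k c m)"
| "rlift k c (RBag ms) = RBag (image_mset (rlift k c) ms)"

primrec occ :: "nat \<Rightarrow> rterm \<Rightarrow> nat" where
  "occ d (RVar i) = (if i = d then 1 else 0)"
| "occ d (RLam m) = occ (Suc d) m"
| "occ d (RApp m n) = occ d m + occ d n"
| "occ d (RES m n) = occ (Suc d) m + occ d n"
| "occ d (RDer m) = occ d m"
| "occ d (RBag ms) = sum_mset (image_mset (occ d) ms)"

text \<open>Linear substitution: \<open>lsub d m ns m'\<close> holds iff m' is obtained from m by
  replacing the free occurrences of index d by the elements of the multiset ns,
  each occurrence receiving exactly one element and each element used exactly once
  (in any bijective way, i.e. for every permutation \<sigma>), the binder being removed.\<close>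
inductive lsub :: "nat \<Rightarrow> rterm \<Rightarrow> rterm multiset \<Rightarrow> rterm \<Rightarrow> bool" where
  ls_hit:  "lsub d (RVar d) {#n#} (rlift d 0 n)"
| ls_var:  "i \<noteq> d \<Longrightarrow> lsub d (RVar i) {#} (if d < i then RVar (i - 1) else RVar i)"
| ls_lam:  "lsub (Suc d) m A m' \<Longrightarrow> lsub d (RLam m) A (RLam m')"
| ls_app:  "lsub d m A m' \<Longrightarrow> lsub d n B n' \<Longrightarrow> lsub d (RApp m n) (A + B) (RApp m' n')"
| ls_es:   "lsub (Suc d) m A m' \<Longrightarrow> lsub d n B n' \<Longrightarrow> lsub d (RES m n) (A + B) (RES m' n')"
| ls_der:  "lsub d m A m' \<Longrightarrow> lsub d (RDer m) A (RDer m')"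
| ls_nil:  "lsub d (RBag {#}) {#} (RBag {#})"
| ls_cons: "lsub d m A m' \<Longrightarrow> lsub d (RBag ms) B (RBag ms') \<Longrightarrow>
            lsub d (RBag (add_mset m ms)) (A + B) (RBag (add_mset m' ms'))"

definition rlplug :: "rterm \<Rightarrow> rterm list \<Rightarrow> rterm" where
  "rlplug m ls = foldl RES m ls"

text \<open>Resource reduction; the target is \<open>Some p\<close> for a resource term p, or \<open>None\<close>
  for the zero symbol \<emptyset>.  Closed under all contexts; contexts are linear, so a
  subterm reducing to \<emptyset> makes the whole term \<emptyset>.\<close>
inductive rstep :: "rterm \<Rightarrow> rterm option \<Rightarrow> bool" where
  r_der1:  "rstep (RDer (rlplug (RBag {#m#}) ls)) (Some (rlplug m ls))"
| r_der0:  "size ms \<noteq> 1 \<Longrightarrow> rstep (RDer (rlplug (RBag ms) ls)) None"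
| r_beta:  "rstep (RApp (rlplug (RLam m) ls) n) (Some (rlplug (RES m (rlift (length ls) 0 n)) ls))"
| r_sub:   "size ns = occ 0 m \<Longrightarrow> lsub 0 (rlift (length ls) 1 m) ns p \<Longrightarrow>
            rstep (RES m (rlplug (RBag ns) ls)) (Some (rlplug p ls))"
| r_sub0:  "size ns \<noteq> occ 0 m \<Longrightarrow> rstep (RES m (rlplug (RBag ns) ls)) None"
| c_lam:   "rstep m r \<Longrightarrow> rstep (RLam m) (map_option RLam r)"
| c_appl:  "rstep m r \<Longrightarrow> rstep (RApp m n) (map_option (\<lambda>x. RApp x n) r)"
| c_appr:  "rstep n r \<Longrightarrow> rstep (RApp m n) (map_option (RApp m) r)"
| c_esl:   "rstep m r \<Longrightarrow> rstep (RES m n) (map_option (\<lambda>x. RES x n) r)"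
| c_esr:   "rstep n r \<Longrightarrow> rstep (RES m n) (map_option (RES m) r)"
| c_der:   "rstep m r \<Longrightarrow> rstep (RDer m) (map_option RDer r)"
| c_bag:   "rstep m r \<Longrightarrow> rstep (RBag (add_mset m ms)) (map_option (\<lambda>x. RBag (add_mset x ms)) r)"

text \<open>Multi-step reduction to a resource term (never passing through \<emptyset>).\<close>
definition rsteps :: "rterm \<Rightarrow> rterm \<Rightarrow> bool" where
  "rsteps = (\<lambda>m p. rstep m (Some p))\<^sup>*\<^sup>*"

definition rnormal :: "rterm \<Rightarrow> bool" where
  "rnormal p \<longleftrightarrow> (\<nexists>r. rstep p r)"

inductive approx :: "rterm \<Rightarrow> dterm \<Rightarrow> bool" where
  a_var: "approx (RVar i) (Var i)"
| a_lam: "approx m M \<Longrightarrow> approx (RLam m) (Lam M)"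
| a_app: "approx m M \<Longrightarrow> approx n N \<Longrightarrow> approx (RApp m n) (App M N)"
| a_es:  "approx m M \<Longrightarrow> approx n N \<Longrightarrow> approx (RES m n) (ES M N)"
| a_der: "approx m M \<Longrightarrow> approx (RDer m) (Der M)"
| a_bag: "(\<forall>m\<in>#ms. approx m M) \<Longrightarrow> approx (RBag ms) (Bang M)"

definition taylor :: "dterm \<Rightarrow> rterm set" where
  "taylor M = {m. approx m M}"

definition nf_taylor :: "dterm \<Rightarrow> rterm set" where
  "nf_taylor M = {p. rnormal p \<and> (\<exists>m\<in>taylor M. rsteps m p)}"

end

theory Submission
  imports Defs "HOL-Library.Function_Algebras"
begin


datatype ty = TBag "ty multiset" | TArr "ty multiset" ty

type_synonym env = "nat \<Rightarrow> ty multiset"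

definition single :: "nat \<Rightarrow> ty \<Rightarrow> env" where
  "single i A = (\<lambda>j. if j = i then {#A#} else {#})"

definition econs :: "ty multiset \<Rightarrow> env \<Rightarrow> env" where
  "econs M G = case_nat M G"

definition lenv :: "nat \<Rightarrow> nat \<Rightarrow> env \<Rightarrow> env" where
  "lenv k c G = (\<lambda>i. if i < c then G i else if i < c + k then {#} else G (i - k))"

inductive rty :: "env \<Rightarrow> rterm \<Rightarrow> ty \<Rightarrow> bool" where
  t_var: "rty (single i A) (RVar i) A"
| t_lam: "rty (econs M G) m B \<Longrightarrow> rty G (RLam m) (TArr M B)"
| t_app: "rty G m (TArr M B) \<Longrightarrow> rty D n (TBag M) \<Longrightarrow> rty (G + D) (RApp m n) B"
| t_es:  "rty (econs M G) m B \<Longrightarrow> rty D n (TBag M) \<Longrightarrow> rty (G + D) (RES m n) B"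
| t_der: "rty G m (TBag {#A#}) \<Longrightarrow> rty G (RDer m) A"
| t_nil: "rty 0 (RBag {#}) (TBag {#})"
| t_cons: "rty G m A \<Longrightarrow> rty D (RBag ms) (TBag M) \<Longrightarrow>
     rty (G + D) (RBag (add_mset m ms)) (TBag (add_mset A M))"

inductive_cases rty_varE: "rty G (RVar i) A"
inductive_cases rty_lamE: "rty G (RLam m) A"
inductive_cases rty_appE: "rty G (RApp m n) A"
inductive_cases rty_esE: "rty G (RES m n) A"
inductive_cases rty_derE: "rty G (RDer m) A"
inductive_cases rty_bagE: "rty G (RBag ms) A"

lemma econs_simps[simp]: "econs M G 0 = M" "econs M G (Suc i) = G i"
  by (simp_all add: econs_def)

lemma econs_add[simp]: "econs M G + econs N D = econs (M + N) (G + D)"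
  by (rule ext, simp add: econs_def split: nat.split)

lemma econs_zero[simp]: "econs {#} 0 = 0"
  by (rule ext, simp add: econs_def split: nat.split)

lemma rty_occ: "rty G m A \<Longrightarrow> size (G i) = occ i m"
proof (induction arbitrary: i rule: rty.induct)
  case (t_var j A) then show ?case by (simp add: single_def)
next
  case (t_lam M G m B) then show ?case by (metis econs_simps(2) occ.simps(2))
next
  case (t_es M G m B D n) then show ?case by (metis econs_simps(2) occ.simps(4) plus_fun_apply size_union)
qed auto

lemma rty_bag_size: "rty G (RBag ms) T \<Longrightarrow> \<exists>M. T = TBag M \<and> size M = size ms"
proof (induction G "RBag ms" T arbitrary: ms rule: rty.induct)
  case t_nil then show ?case by simp
next
  case (t_cons G m A D ms M) then show ?case by auto
qed

lemma rty_bag_split_term: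
  assumes "rty G (RBag (add_mset m ms)) T"
  shows "\<exists>A M G1 G2. T = TBag (add_mset A M) \<and> G = G1 + G2 \<and> rty G1 m A \<and> rty G2 (RBag ms) (TBag M)"
  using assms
proof (induction G "RBag (add_mset m ms)" T arbitrary: ms rule: rty.induct)
  case (t_cons G0 m1 A1 D ms1 M1)
  show ?case
  proof (cases "m1 = m")
    case True
    then show ?thesis using t_cons by auto
  next
    case False
    from t_cons.hyps(5) False have "m \<in># ms1"
      by (metis add_mset_eq_single insert_noteq_member)
    then obtain ms2 where ms1: "ms1 = add_mset m ms2" by (metis multi_member_split)
    from t_cons.hyps(5) ms1 have ms: "ms = add_mset m1 ms2"
      by (metis add_mset_commute add_mset_remove_trivial)
    from t_cons.hyps(4)[OF ms1] obtain A M G1 G2 where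
      h: "TBag M1 = TBag (add_mset A M)" "D = G1 + G2" "rty G1 m A" "rty G2 (RBag ms2) (TBag M)" by blast
    have "rty (G0 + G2) (RBag (add_mset m1 ms2)) (TBag (add_mset A1 M))"
      using rty.t_cons[OF t_cons.hyps(1) h(4)] by simp
    then show ?thesis using h ms
      by (rule_tac x=A in exI, rule_tac x="add_mset A1 M" in exI, rule_tac x=G1 in exI,
          rule_tac x="G0 + G2" in exI) (auto simp: add_ac add_mset_commute)
  qed
qed simp

lemma rty_bag_split_type0:
  "rty G t T \<Longrightarrow> t = RBag ns \<Longrightarrow> T = TBag (add_mset A M) \<Longrightarrow>
   \<exists>n ns' G1 G2. ns = add_mset n ns' \<and> G = G1 + G2 \<and> rty G1 n A \<and> rty G2 (RBag ns') (TBag M)"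
proof (induction arbitrary: ns M rule: rty.induct)
  case (t_cons G0 m1 A1 D ms1 M1)
  show ?case
  proof (cases "A1 = A")
    case True
    then show ?thesis using t_cons by auto
  next
    case False
    from t_cons.prems(2) False have "A \<in># M1"
      by (metis add_mset_eq_single insert_noteq_member ty.inject(1))
    then obtain M2 where M1: "M1 = add_mset A M2" by (metis multi_member_split)
    from t_cons.prems(2) M1 have M: "M = add_mset A1 M2"
      by (metis add_mset_commute add_mset_remove_trivial ty.inject(1))
    from t_cons.IH(2)[OF refl M1[THEN arg_cong[where f=TBag]]] obtain n ns' G1 G2 where
      h: "ms1 = add_mset n ns'" "D = G1 + G2" "rty G1 n A" "rty G2 (RBag ns') (TBag M2)" by blast
    have r: "rty (G0 + G2) (RBag (add_mset m1 ns')) (TBag (add_mset A1 M2))"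
      using rty.t_cons[OF t_cons.hyps(1) h(4)] by simp
    have "ns = add_mset n (add_mset m1 ns')" using t_cons.prems(1) h(1) by (simp add: add_mset_commute)
    moreover have "G0 + D = G1 + (G0 + G2)" using h(2) by (simp add: add_ac)
    ultimately show ?thesis using h(3) r M by blast
  qed
qed auto

lemma rty_bag_split_type:
  assumes "rty G (RBag ns) (TBag (add_mset A M))"
  shows "\<exists>n ns' G1 G2. ns = add_mset n ns' \<and> G = G1 + G2 \<and> rty G1 n A \<and> rty G2 (RBag ns') (TBag M)"
  using rty_bag_split_type0[OF assms refl refl] .

lemma rty_bag_empty_type: "rty G (RBag ns) (TBag {#}) \<Longrightarrow> ns = {#} \<and> G = 0"
  by (erule rty_bagE) simp_all

lemma rty_bag_single_type: "rty G (RBag ns) (TBag {#A#}) \<Longrightarrow> \<exists>n. ns = {#n#} \<and> rty G n A"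
proof -
  assume "rty G (RBag ns) (TBag {#A#})"
  then obtain n ns' G1 G2 where "ns = add_mset n ns'" "G = G1 + G2" "rty G1 n A" "rty G2 (RBag ns') (TBag {#})"
    using rty_bag_split_type by blast
  then show ?thesis using rty_bag_empty_type by fastforce
qed

lemma rty_bag_merge:
  "rty G1 (RBag a) (TBag M1) \<Longrightarrow> rty G2 (RBag b) (TBag M2) \<Longrightarrow> rty (G1 + G2) (RBag (a + b)) (TBag (M1 + M2))"
proof (induction G1 "RBag a" "TBag M1" arbitrary: a M1 rule: rty.induct)
  case t_nil then show ?case by simp
next
  case (t_cons G m A D ms M)
  have "rty (D + G2) (RBag (ms + b)) (TBag (M + M2))" using t_cons by simp
  from rty.t_cons[OF t_cons.hyps(1) this] show ?case by (simp add: add_ac)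
qed

lemma rty_bag_split_types:
  "rty G (RBag ns) (TBag (M1 + M2)) \<Longrightarrow> \<exists>ns1 ns2 G1 G2. ns = ns1 + ns2 \<and> G = G1 + G2 \<and>
     rty G1 (RBag ns1) (TBag M1) \<and> rty G2 (RBag ns2) (TBag M2)"
proof (induction M1 arbitrary: G ns)
  case empty
  have "ns = {#} + ns" "G = 0 + G" by simp_all
  then show ?case using empty t_nil by fastforce
next
  case (add A M1)
  from add.prems obtain n ns' G1 G2 where h: "ns = add_mset n ns'" "G = G1 + G2" "rty G1 n A"
     "rty G2 (RBag ns') (TBag (M1 + M2))" using rty_bag_split_type by fastforce
  from add.IH[OF h(4)] obtain ns1 ns2 H1 H2 where h2: "ns' = ns1 + ns2" "G2 = H1 + H2"
     "rty H1 (RBag ns1) (TBag M1)" "rty H2 (RBag ns2) (TBag M2)" by blast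
  have "ns = add_mset n ns1 + ns2" "G = (G1 + H1) + H2" using h h2 by (simp_all add: add_ac)
  then show ?case using rty.t_cons[OF h(3) h2(3)] h2(4) by blast
qed

lemma rty_bag_split_terms:
  "rty G (RBag (ns1 + ns2)) T \<Longrightarrow> \<exists>M1 M2 G1 G2. T = TBag (M1 + M2) \<and> G = G1 + G2 \<and>
     rty G1 (RBag ns1) (TBag M1) \<and> rty G2 (RBag ns2) (TBag M2)"
proof (induction ns1 arbitrary: G T)
  case empty
  obtain M where "T = TBag M" using rty_bag_size[OF empty.prems] by blast
  moreover have "G = 0 + G" "M = {#} + M" by simp_all
  ultimately show ?case using empty t_nil by fastforce
next
  case (add n ns1)
  from add.prems obtain A M G1 G2 where h: "T = TBag (add_mset A M)" "G = G1 + G2" "rty G1 n A"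
     "rty G2 (RBag (ns1 + ns2)) (TBag M)" using rty_bag_split_term by fastforce
  from add.IH[OF h(4)] obtain M1 M2 H1 H2 where h2: "M = M1 + M2" "G2 = H1 + H2"
     "rty H1 (RBag ns1) (TBag M1)" "rty H2 (RBag ns2) (TBag M2)" by blast
  have "T = TBag (add_mset A M1 + M2)" "G = (G1 + H1) + H2" using h h2 by (simp_all add: add_ac)
  then show ?case using rty.t_cons[OF h(3) h2(3)] h2(4) by blast
qed

lemma econs_eq_iff[simp]: "econs M G = econs M' G' \<longleftrightarrow> M = M' \<and> G = G'"
proof
  assume h: "econs M G = econs M' G'"
  have "M = M'" using arg_cong[OF h, of "\<lambda>f. f 0"] by simp
  moreover have "G = G'"
  proof (rule ext)
    fix i show "G i = G' i" using arg_cong[OF h, of "\<lambda>f. f (Suc i)"] by simp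
  qed
  ultimately show "M = M' \<and> G = G'" by simp
qed simp

lemma econs_split: "G = econs (G 0) (\<lambda>i. G (Suc i))"
  by (rule ext, simp add: econs_def split: nat.split)

lemma lenv_single: "lenv k c (single i A) = single (if c \<le> i then i + k else i) A"
  by (rule ext, auto simp: lenv_def single_def)

lemma lenv_econs: "lenv k (Suc c) (econs M G) = econs M (lenv k c G)"
proof (rule ext)
  fix i show "lenv k (Suc c) (econs M G) i = econs M (lenv k c G) i"
  proof (cases i)
    case (Suc j)
    then show ?thesis by (cases "j < c + k") (auto simp: lenv_def Suc_diff_le)
  qed (simp add: lenv_def)
qed

lemma lenv_add: "lenv k c (G + D) = lenv k c G + lenv k c D"
  by (rule ext, auto simp: lenv_def)

lemma lenv_zero[simp]: "lenv k c 0 = 0"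
  by (rule ext, auto simp: lenv_def)

lemma rty_lift: "rty G m A \<Longrightarrow> rty (lenv k c G) (rlift k c m) A"
proof (induction arbitrary: c rule: rty.induct)
  case (t_var i A) then show ?case by (simp add: lenv_single rty.t_var)
next
  case (t_lam M G m B)
  have "rty (econs M (lenv k c G)) (rlift k (Suc c) m) B" using t_lam.IH[of "Suc c"] by (simp only: lenv_econs)
  then show ?case by (simp only: rlift.simps) (rule rty.t_lam)
next
  case (t_app G m M B D n)
  have "rty (lenv k c G + lenv k c D) (RApp (rlift k c m) (rlift k c n)) B"
    by (rule rty.t_app[OF t_app.IH(1) t_app.IH(2)])
  then show ?case by (simp only: lenv_add rlift.simps)
next
  case (t_es M G m B D n)
  have "rty (econs M (lenv k c G)) (rlift k (Suc c) m) B" using t_es.IH(1)[of "Suc c"] by (simp only: lenv_econs)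
  have "rty (lenv k c G + lenv k c D) (RES (rlift k (Suc c) m) (rlift k c n)) B"
    by (rule rty.t_es[OF \<open>rty (econs M (lenv k c G)) _ _\<close> t_es.IH(2)])
  then show ?case by (simp only: lenv_add rlift.simps)
next
  case (t_der G m A) then show ?case by (simp only: rlift.simps) (rule rty.t_der)
next
  case t_nil then show ?case by (simp only: lenv_zero rlift.simps image_mset_empty) (rule rty.t_nil)
next
  case (t_cons G m A D ms M)
  have "rty (lenv k c G + lenv k c D) (RBag (add_mset (rlift k c m) (image_mset (rlift k c) ms))) (TBag (add_mset A M))"
    using rty.t_cons[OF t_cons.IH(1)] t_cons.IH(2) by simp
  then show ?case by (simp only: lenv_add rlift.simps image_mset_add_mset)
qed

lemma rty_unlift: "rty G (rlift k c m) A \<Longrightarrow> \<exists>G0. rty G0 m A \<and> G = lenv k c G0"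
proof (induction m arbitrary: G c A)
  case (RVar i)
  then have "G = single (if c \<le> i then i + k else i) A" by (auto elim: rty_varE)
  then have "rty (single i A) (RVar i) A \<and> G = lenv k c (single i A)" by (simp add: lenv_single rty.t_var)
  then show ?case by blast
next
  case (RLam m)
  from RLam.prems obtain M B where h: "A = TArr M B" "rty (econs M G) (rlift k (Suc c) m) B"
    by (auto elim: rty_lamE)
  from RLam.IH[OF h(2)] obtain G0 where g: "rty G0 m B" "econs M G = lenv k (Suc c) G0" by blast
  have e: "G0 = econs (G0 0) (\<lambda>i. G0 (Suc i))" by (rule econs_split)
  with g(2) have "econs M G = econs (G0 0) (lenv k c (\<lambda>i. G0 (Suc i)))" by (metis lenv_econs)
  then have "M = G0 0" "G = lenv k c (\<lambda>i. G0 (Suc i))" by simp_all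
  moreover have "rty (\<lambda>i. G0 (Suc i)) (RLam m) (TArr (G0 0) B)" using g(1) e by (metis rty.t_lam)
  ultimately show ?case using h(1) by blast
next
  case (RApp m n)
  from RApp.prems obtain G1 G2 M where h: "G = G1 + G2" "rty G1 (rlift k c m) (TArr M A)"
    "rty G2 (rlift k c n) (TBag M)" by (auto elim: rty_appE)
  from RApp.IH(1)[OF h(2)] obtain H1 where h1: "rty H1 m (TArr M A)" "G1 = lenv k c H1" by blast
  from RApp.IH(2)[OF h(3)] obtain H2 where h2: "rty H2 n (TBag M)" "G2 = lenv k c H2" by blast
  have "rty (H1 + H2) (RApp m n) A" by (rule rty.t_app[OF h1(1) h2(1)])
  moreover have "G = lenv k c (H1 + H2)" using h h1 h2 by (simp only: lenv_add)
  ultimately show ?case by blast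
next
  case (RES m n)
  from RES.prems obtain G1 G2 M where h: "G = G1 + G2" "rty (econs M G1) (rlift k (Suc c) m) A"
    "rty G2 (rlift k c n) (TBag M)" by (auto elim: rty_esE)
  from RES.IH(1)[OF h(2)] obtain G0 where g: "rty G0 m A" "econs M G1 = lenv k (Suc c) G0" by blast
  have e: "G0 = econs (G0 0) (\<lambda>i. G0 (Suc i))" by (rule econs_split)
  with g(2) have "econs M G1 = econs (G0 0) (lenv k c (\<lambda>i. G0 (Suc i)))" by (metis lenv_econs)
  then have m: "M = G0 0" "G1 = lenv k c (\<lambda>i. G0 (Suc i))" by simp_all
  from RES.IH(2)[OF h(3)] obtain H2 where h2: "rty H2 n (TBag M)" "G2 = lenv k c H2" by blast
  have "rty ((\<lambda>i. G0 (Suc i)) + H2) (RES m n) A" using g(1) e m(1) h2(1) by (metis rty.t_es)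
  moreover have "G = lenv k c ((\<lambda>i. G0 (Suc i)) + H2)" using h m h2 by (simp only: lenv_add)
  ultimately show ?case by blast
next
  case (RDer m)
  then have "rty G (rlift k c m) (TBag {#A#})" by (auto elim: rty_derE)
  then show ?case using RDer.IH rty.t_der by blast
next
  case (RBag ms)
  then show ?case
  proof (induction ms arbitrary: G A)
    case empty
    then have "G = 0" "A = TBag {#}" by (auto elim: rty_bagE)
    then show ?case using rty.t_nil by (metis lenv_zero)
  next
    case (add x ms)
    from add.prems(2) obtain A' M G1 G2 where h: "A = TBag (add_mset A' M)" "G = G1 + G2"
      "rty G1 (rlift k c x) A'" "rty G2 (RBag (image_mset (rlift k c) ms)) (TBag M)"
      using rty_bag_split_term by fastforce
    from add.prems(1)[of x G1 c A'] h(3) obtain H1 where h1: "rty H1 x A'" "G1 = lenv k c H1" by auto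
    from add.IH[of G2 "TBag M"] add.prems(1) h(4) obtain H2 where
      h2: "rty H2 (RBag ms) (TBag M)" "G2 = lenv k c H2" by fastforce
    have "rty (H1 + H2) (RBag (add_mset x ms)) A" using rty.t_cons[OF h1(1) h2(1)] h(1) by simp
    moreover have "G = lenv k c (H1 + H2)" using h h1 h2 by (simp only: lenv_add)
    ultimately show ?case by blast
  qed
qed



lemma rlplug_snoc[simp]: "rlplug m (ls @ [l]) = RES (rlplug m ls) l"
  by (simp add: rlplug_def)

lemma rlplug_Nil[simp]: "rlplug m [] = m"
  by (simp add: rlplug_def)

lemma rty_plug_inv:
  "rty G (rlplug m ls) A \<Longrightarrow> \<exists>H C. rty H m A \<and> G = (\<lambda>j. H (j + length ls)) + C \<and>
     (\<forall>H' m' A'. rty H' m' A' \<longrightarrow> (\<forall>i<length ls. H' i = H i) \<longrightarrow>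
        rty ((\<lambda>j. H' (j + length ls)) + C) (rlplug m' ls) A')"
proof (induction ls arbitrary: G A rule: rev_induct)
  case Nil
  then show ?case by (rule_tac x=G in exI, rule_tac x=0 in exI) simp
next
  case (snoc l ls)
  define k where "k = length ls"
  from snoc.prems obtain G1 G2 M where h: "G = G1 + G2" "rty (econs M G1) (rlplug m ls) A"
    "rty G2 l (TBag M)" by (auto elim: rty_esE)
  from snoc.IH[OF h(2)] obtain H C where ih: "rty H m A" "econs M G1 = (\<lambda>j. H (j + k)) + C"
    "\<And>H' m' A'. rty H' m' A' \<Longrightarrow> (\<forall>i<k. H' i = H i) \<Longrightarrow>
        rty ((\<lambda>j. H' (j + k)) + C) (rlplug m' ls) A'" unfolding k_def by blast
  have M: "M = H k + C 0" using fun_cong[OF ih(2), of 0] by simp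
  have G1: "G1 j = H (j + Suc k) + C (Suc j)" for j using fun_cong[OF ih(2), of "Suc j"] by simp
  define C' where "C' = (\<lambda>j. C (Suc j)) + G2"
  have "G = (\<lambda>j. H (j + Suc k)) + C'"
    by (rule ext) (simp add: h(1) G1 C'_def add.assoc)
  moreover have "rty ((\<lambda>j. H' (j + Suc k)) + C') (rlplug m' (ls @ [l])) A'"
    if a: "rty H' m' A'" "\<forall>i<Suc k. H' i = H i" for H' m' A'
  proof -
    have r: "rty ((\<lambda>j. H' (j + k)) + C) (rlplug m' ls) A'" using ih(3)[OF a(1)] a(2) by simp
    have "(\<lambda>j. H' (j + k)) + C = econs M ((\<lambda>j. H' (j + Suc k)) + (\<lambda>j. C (Suc j)))"
      using a(2) M by (auto simp: econs_def split: nat.split)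
    with r have "rty (econs M ((\<lambda>j. H' (j + Suc k)) + (\<lambda>j. C (Suc j)))) (rlplug m' ls) A'" by simp
    from rty.t_es[OF this h(3)] show ?thesis by (simp add: C'_def add.assoc)
  qed
  ultimately show ?case using ih(1) unfolding k_def length_append_singleton by blast
qed

definition rmenv :: "nat \<Rightarrow> env \<Rightarrow> env" where
  "rmenv d G = (\<lambda>i. if i < d then G i else G (Suc i))"

lemma rmenv_single: "rmenv d (single i A) = (if i = d then 0 else single (if d < i then i - 1 else i) A)"
  by (rule ext) (auto simp: rmenv_def single_def)

lemma rmenv_econs: "rmenv (Suc d) (econs M G) = econs M (rmenv d G)"
  by (rule ext) (auto simp: rmenv_def econs_def split: nat.split)

lemma rmenv_add: "rmenv d (G + D) = rmenv d G + rmenv d D"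
  by (rule ext) (auto simp: rmenv_def)

lemma rmenv_zero[simp]: "rmenv d 0 = 0"
  by (rule ext) (auto simp: rmenv_def)


lemma lenv_shift_suc: "lenv (Suc d) 0 D = econs {#} (lenv d 0 D)"
  by (rule ext) (auto simp: lenv_def econs_def split: nat.split)

lemma lsub_bag: "lsub d (RBag ms) ns q \<Longrightarrow> \<exists>ms'. q = RBag ms'"
  by (erule lsub.cases) auto

lemma env_swap4: "((a::env) + b) + (c + e) = (a + c) + (b + e)"
  by (simp add: add_ac)

lemma rty_subst:
  "rty Ga a B \<Longrightarrow> rty D (RBag ns) (TBag (Ga d)) \<Longrightarrow>
   \<exists>q. lsub d a ns q \<and> rty (rmenv d Ga + lenv d 0 D) q B"
proof (induction arbitrary: d ns D rule: rty.induct)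
  case (t_var i A)
  show ?case
  proof (cases "i = d")
    case True
    with t_var have "rty D (RBag ns) (TBag {#A#})" by (simp add: single_def)
    then obtain n where n: "ns = {#n#}" "rty D n A" using rty_bag_single_type by blast
    have "rty (lenv d 0 D) (rlift d 0 n) A" by (rule rty_lift[OF n(2)])
    moreover have "rmenv d (single i A) + lenv d 0 D = lenv d 0 D" using True by (simp add: rmenv_single)
    ultimately show ?thesis using True n(1) lsub.ls_hit by metis
  next
    case False
    with t_var have "rty D (RBag ns) (TBag {#})" by (simp add: single_def)
    then have e: "ns = {#}" "D = 0" using rty_bag_empty_type by blast+
    have "rty (rmenv d (single i A) + lenv d 0 D) (if d < i then RVar (i - 1) else RVar i) A"
      using False e by (simp add: rmenv_single rty.t_var)
    then show ?thesis using lsub.ls_var[OF False] e by blast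
  qed
next
  case (t_lam M G m B)
  have "rty D (RBag ns) (TBag (econs M G (Suc d)))" using t_lam.prems by simp
  from t_lam.IH[OF this] obtain q where q: "lsub (Suc d) m ns q"
    "rty (rmenv (Suc d) (econs M G) + lenv (Suc d) 0 D) q B" by blast
  have "rty (econs M (rmenv d G + lenv d 0 D)) q B" using q(2)
    by (simp only: rmenv_econs lenv_shift_suc econs_add add_0_right)
  from rty.t_lam[OF this] lsub.ls_lam[OF q(1)] show ?case by blast
next
  case (t_app G m M B D' n)
  from t_app.prems have "rty D (RBag ns) (TBag (G d + D' d))" by simp
  then obtain ns1 ns2 D1 D2 where s: "ns = ns1 + ns2" "D = D1 + D2"
    "rty D1 (RBag ns1) (TBag (G d))" "rty D2 (RBag ns2) (TBag (D' d))"
    using rty_bag_split_types by blast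
  from t_app.IH(1)[OF s(3)] obtain q1 where q1: "lsub d m ns1 q1" "rty (rmenv d G + lenv d 0 D1) q1 (TArr M B)" by blast
  from t_app.IH(2)[OF s(4)] obtain q2 where q2: "lsub d n ns2 q2" "rty (rmenv d D' + lenv d 0 D2) q2 (TBag M)" by blast
  have "rty ((rmenv d G + lenv d 0 D1) + (rmenv d D' + lenv d 0 D2)) (RApp q1 q2) B"
    by (rule rty.t_app[OF q1(2) q2(2)])
  then have "rty (rmenv d (G + D') + lenv d 0 D) (RApp q1 q2) B"
    by (simp only: s(2) rmenv_add lenv_add env_swap4)
  with lsub.ls_app[OF q1(1) q2(1)] s(1) show ?case by blast
next
  case (t_es M G m B D' n)
  from t_es.prems have "rty D (RBag ns) (TBag (econs M G (Suc d) + D' d))" by simp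
  then obtain ns1 ns2 D1 D2 where s: "ns = ns1 + ns2" "D = D1 + D2"
    "rty D1 (RBag ns1) (TBag (econs M G (Suc d)))" "rty D2 (RBag ns2) (TBag (D' d))"
    using rty_bag_split_types by blast
  from t_es.IH(1)[OF s(3)] obtain q1 where q1: "lsub (Suc d) m ns1 q1"
    "rty (rmenv (Suc d) (econs M G) + lenv (Suc d) 0 D1) q1 B" by blast
  have q1': "rty (econs M (rmenv d G + lenv d 0 D1)) q1 B" using q1(2)
    by (simp only: rmenv_econs lenv_shift_suc econs_add add_0_right)
  from t_es.IH(2)[OF s(4)] obtain q2 where q2: "lsub d n ns2 q2" "rty (rmenv d D' + lenv d 0 D2) q2 (TBag M)" by blast
  have "rty ((rmenv d G + lenv d 0 D1) + (rmenv d D' + lenv d 0 D2)) (RES q1 q2) B"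
    by (rule rty.t_es[OF q1' q2(2)])
  then have "rty (rmenv d (G + D') + lenv d 0 D) (RES q1 q2) B"
    by (simp only: s(2) rmenv_add lenv_add env_swap4)
  with lsub.ls_es[OF q1(1) q2(1)] s(1) show ?case by blast
next
  case (t_der G m A)
  from t_der.IH[OF t_der.prems] obtain q where "lsub d m ns q" "rty (rmenv d G + lenv d 0 D) q (TBag {#A#})" by blast
  with rty.t_der lsub.ls_der show ?case by blast
next
  case t_nil
  then have "ns = {#}" "D = 0" using rty_bag_empty_type by auto
  then show ?case using lsub.ls_nil rty.t_nil by (metis add_0_right lenv_zero rmenv_zero)
next
  case (t_cons G m A D' ms M)
  from t_cons.prems have "rty D (RBag ns) (TBag (G d + D' d))" by simp
  then obtain ns1 ns2 D1 D2 where s: "ns = ns1 + ns2" "D = D1 + D2"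
    "rty D1 (RBag ns1) (TBag (G d))" "rty D2 (RBag ns2) (TBag (D' d))"
    using rty_bag_split_types by blast
  from t_cons.IH(1)[OF s(3)] obtain q1 where q1: "lsub d m ns1 q1" "rty (rmenv d G + lenv d 0 D1) q1 A" by blast
  from t_cons.IH(2)[OF s(4)] obtain q2 where q2: "lsub d (RBag ms) ns2 q2" "rty (rmenv d D' + lenv d 0 D2) q2 (TBag M)" by blast
  from lsub_bag[OF q2(1)] obtain ms' where ms': "q2 = RBag ms'" by blast
  have "rty ((rmenv d G + lenv d 0 D1) + (rmenv d D' + lenv d 0 D2)) (RBag (add_mset q1 ms')) (TBag (add_mset A M))"
    by (rule rty.t_cons[OF q1(2) q2(2)[unfolded ms']])
  then have "rty (rmenv d (G + D') + lenv d 0 D) (RBag (add_mset q1 ms')) (TBag (add_mset A M))"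
    by (simp only: s(2) rmenv_add lenv_add env_swap4)
  with lsub.ls_cons[OF q1(1) q2(1)[unfolded ms']] s(1) show ?case by blast
qed

lemma rty_bag_single: "rty D n A \<Longrightarrow> rty D (RBag {#n#}) (TBag {#A#})"
  using rty.t_cons[OF _ rty.t_nil] by (metis add_0_right)

lemma rty_unsubst:
  "lsub d a ns q \<Longrightarrow> rty G q B \<Longrightarrow>
   \<exists>Ga D. rty Ga a B \<and> rty D (RBag ns) (TBag (Ga d)) \<and> G = rmenv d Ga + lenv d 0 D"
proof (induction arbitrary: G B rule: lsub.induct)
  case (ls_hit d n)
  from rty_unlift[OF ls_hit] obtain D where D: "rty D n B" "G = lenv d 0 D" by blast
  have "rty (single d B) (RVar d) B" by (rule rty.t_var)
  moreover have "rty D (RBag {#n#}) (TBag (single d B d))" using rty_bag_single[OF D(1)] by (simp add: single_def)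
  moreover have "G = rmenv d (single d B) + lenv d 0 D" using D(2) by (simp add: rmenv_single)
  ultimately show ?case by blast
next
  case (ls_var i d)
  then have G: "G = single (if d < i then i - 1 else i) B" by (auto elim: rty_varE split: if_splits)
  have "rty (single i B) (RVar i) B" by (rule rty.t_var)
  moreover have "rty 0 (RBag {#}) (TBag (single i B d))" using ls_var(1) rty.t_nil by (simp add: single_def)
  moreover have "G = rmenv d (single i B) + lenv d 0 0" using G ls_var(1) by (simp add: rmenv_single)
  ultimately show ?case by blast
next
  case (ls_lam d m A m')
  from ls_lam.prems obtain M B' where h: "B = TArr M B'" "rty (econs M G) m' B'" by (auto elim: rty_lamE)
  from ls_lam.IH[OF h(2)] obtain Ga D where ih: "rty Ga m B'" "rty D (RBag A) (TBag (Ga (Suc d)))"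
    "econs M G = rmenv (Suc d) Ga + lenv (Suc d) 0 D" by blast
  define Gt where "Gt = (\<lambda>i. Ga (Suc i))"
  have e: "Ga = econs (Ga 0) Gt" unfolding Gt_def by (rule econs_split)
  have "econs M G = econs (Ga 0) (rmenv d Gt + lenv d 0 D)"
    using ih(3) e by (metis rmenv_econs lenv_shift_suc econs_add add_0_right)
  then have m: "M = Ga 0" "G = rmenv d Gt + lenv d 0 D" by simp_all
  have "rty Gt (RLam m) (TArr M B')" using ih(1) e m(1) by (metis rty.t_lam)
  moreover have "rty D (RBag A) (TBag (Gt d))" using ih(2) by (simp add: Gt_def)
  ultimately show ?case using m(2) h(1) by blast
next
  case (ls_app d m A m' n B0 n')
  from ls_app.prems obtain G1 G2 M where h: "G = G1 + G2" "rty G1 m' (TArr M B)" "rty G2 n' (TBag M)"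
    by (auto elim: rty_appE)
  from ls_app.IH(1)[OF h(2)] obtain Ga1 D1 where i1: "rty Ga1 m (TArr M B)"
    "rty D1 (RBag A) (TBag (Ga1 d))" "G1 = rmenv d Ga1 + lenv d 0 D1" by blast
  from ls_app.IH(2)[OF h(3)] obtain Ga2 D2 where i2: "rty Ga2 n (TBag M)"
    "rty D2 (RBag B0) (TBag (Ga2 d))" "G2 = rmenv d Ga2 + lenv d 0 D2" by blast
  have "rty (Ga1 + Ga2) (RApp m n) B" by (rule rty.t_app[OF i1(1) i2(1)])
  moreover have "rty (D1 + D2) (RBag (A + B0)) (TBag ((Ga1 + Ga2) d))"
    using rty_bag_merge[OF i1(2) i2(2)] by simp
  moreover have "G = rmenv d (Ga1 + Ga2) + lenv d 0 (D1 + D2)"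
    using h(1) i1(3) i2(3) by (simp only: rmenv_add lenv_add env_swap4)
  ultimately show ?case by blast
next
  case (ls_es d m A m' n B0 n')
  from ls_es.prems obtain G1 G2 M where h: "G = G1 + G2" "rty (econs M G1) m' B" "rty G2 n' (TBag M)"
    by (auto elim: rty_esE)
  from ls_es.IH(1)[OF h(2)] obtain Ga D1 where i1: "rty Ga m B"
    "rty D1 (RBag A) (TBag (Ga (Suc d)))" "econs M G1 = rmenv (Suc d) Ga + lenv (Suc d) 0 D1" by blast
  define Gt where "Gt = (\<lambda>i. Ga (Suc i))"
  have e: "Ga = econs (Ga 0) Gt" unfolding Gt_def by (rule econs_split)
  have "econs M G1 = econs (Ga 0) (rmenv d Gt + lenv d 0 D1)"
    using i1(3) e by (metis rmenv_econs lenv_shift_suc econs_add add_0_right)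
  then have m: "M = Ga 0" "G1 = rmenv d Gt + lenv d 0 D1" by simp_all
  from ls_es.IH(2)[OF h(3)] obtain Ga2 D2 where i2: "rty Ga2 n (TBag M)"
    "rty D2 (RBag B0) (TBag (Ga2 d))" "G2 = rmenv d Ga2 + lenv d 0 D2" by blast
  have "rty (econs M Gt) m B" using i1(1) e m(1) by simp
  have "rty (Gt + Ga2) (RES m n) B" by (rule rty.t_es[OF \<open>rty (econs M Gt) m B\<close> i2(1)])
  moreover have "rty D1 (RBag A) (TBag (Gt d))" using i1(2) by (simp add: Gt_def)
  then have "rty (D1 + D2) (RBag (A + B0)) (TBag ((Gt + Ga2) d))"
    using rty_bag_merge[OF _ i2(2)] by simp
  moreover have "G = rmenv d (Gt + Ga2) + lenv d 0 (D1 + D2)"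
    using h(1) m(2) i2(3) by (simp only: rmenv_add lenv_add env_swap4)
  ultimately show ?case by blast
next
  case (ls_der d m A m')
  from ls_der.prems have "rty G m' (TBag {#B#})" by (auto elim: rty_derE)
  from ls_der.IH[OF this] rty.t_der show ?case by blast
next
  case (ls_nil d)
  then have "G = 0" "B = TBag {#}" by (auto elim: rty_bagE)
  moreover have "rty 0 (RBag {#}) (TBag ((0::env) d))" using rty.t_nil by simp
  ultimately show ?case using rty.t_nil by (metis add_0_right lenv_zero rmenv_zero)
next
  case (ls_cons d m A m' ms B0 ms')
  from rty_bag_split_term[OF ls_cons.prems] obtain A1 M G1 G2 where h: "B = TBag (add_mset A1 M)"
    "G = G1 + G2" "rty G1 m' A1" "rty G2 (RBag ms') (TBag M)" by blast
  from ls_cons.IH(1)[OF h(3)] obtain Ga1 D1 where i1: "rty Ga1 m A1"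
    "rty D1 (RBag A) (TBag (Ga1 d))" "G1 = rmenv d Ga1 + lenv d 0 D1" by blast
  from ls_cons.IH(2)[OF h(4)] obtain Ga2 D2 where i2: "rty Ga2 (RBag ms) (TBag M)"
    "rty D2 (RBag B0) (TBag (Ga2 d))" "G2 = rmenv d Ga2 + lenv d 0 D2" by blast
  have "rty (Ga1 + Ga2) (RBag (add_mset m ms)) B" using rty.t_cons[OF i1(1) i2(1)] h(1) by simp
  moreover have "rty (D1 + D2) (RBag (A + B0)) (TBag ((Ga1 + Ga2) d))"
    using rty_bag_merge[OF i1(2) i2(2)] by simp
  moreover have "G = rmenv d (Ga1 + Ga2) + lenv d 0 (D1 + D2)"
    using h(2) i1(3) i2(3) by (simp only: rmenv_add lenv_add env_swap4)
  ultimately show ?case by blast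
qed



lemma lenv0_below: "i < k \<Longrightarrow> lenv k 0 G i = {#}"
  by (simp add: lenv_def)

lemma lenv0_above: "lenv k 0 G (j + k) = G j"
  by (simp add: lenv_def)

lemma rmenv0_econs: "rmenv 0 (econs M X) = X"
  by (rule ext) (simp add: rmenv_def)

lemma lenv00: "lenv 0 0 H = H"
  by (rule ext) (simp add: lenv_def)

lemma lenv_c0: "lenv k 1 (econs M G) = econs M (lenv k 0 G)"
  using lenv_econs[of k 0 M G] by simp

lemma progress:
  "rstep m r \<Longrightarrow> rty G m A \<Longrightarrow> \<exists>m'. rstep m (Some m') \<and> rty G m' A"
proof (induction arbitrary: G A rule: rstep.induct)
  case (r_der1 m ls)
  from r_der1 have "rty G (rlplug (RBag {#m#}) ls) (TBag {#A#})" by (auto elim: rty_derE)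
  from rty_plug_inv[OF this] obtain H C where p: "rty H (RBag {#m#}) (TBag {#A#})"
    "G = (\<lambda>j. H (j + length ls)) + C"
    "\<And>H' m' A'. rty H' m' A' \<Longrightarrow> (\<forall>i<length ls. H' i = H i) \<Longrightarrow> rty ((\<lambda>j. H' (j + length ls)) + C) (rlplug m' ls) A'"
    by blast
  from rty_bag_single_type[OF p(1)] have "rty H m A" by auto
  from p(3)[OF this] p(2) have "rty G (rlplug m ls) A" by simp
  then show ?case using rstep.r_der1 by blast
next
  case (r_der0 ms ls)
  from r_der0 have "rty G (rlplug (RBag ms) ls) (TBag {#A#})" by (auto elim: rty_derE)
  from rty_plug_inv[OF this] obtain H where "rty H (RBag ms) (TBag {#A#})" by blast
  from rty_bag_single_type[OF this] r_der0(1) show ?case by auto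
next
  case (r_beta m ls n)
  define k where "k = length ls"
  from r_beta obtain G1 G2 M where h: "G = G1 + G2" "rty G1 (rlplug (RLam m) ls) (TArr M A)"
    "rty G2 n (TBag M)" by (auto elim: rty_appE)
  from rty_plug_inv[OF h(2)] obtain H C where p: "rty H (RLam m) (TArr M A)"
    "G1 = (\<lambda>j. H (j + k)) + C"
    "\<And>H' m' A'. rty H' m' A' \<Longrightarrow> (\<forall>i<k. H' i = H i) \<Longrightarrow> rty ((\<lambda>j. H' (j + k)) + C) (rlplug m' ls) A'"
    unfolding k_def by blast
  from p(1) have "rty (econs M H) m A" by (auto elim: rty_lamE)
  from rty.t_es[OF this rty_lift[OF h(3), of k 0]]
  have "rty (H + lenv k 0 G2) (RES m (rlift k 0 n)) A" .
  from p(3)[OF this] have "rty ((\<lambda>j. (H + lenv k 0 G2) (j + k)) + C) (rlplug (RES m (rlift k 0 n)) ls) A"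
    by (simp add: lenv0_below)
  moreover have "(\<lambda>j. (H + lenv k 0 G2) (j + k)) + C = G"
    by (rule ext) (simp add: h(1) p(2) lenv0_above add_ac)
  ultimately show ?case using rstep.r_beta[of m ls n] unfolding k_def by auto
next
  case (r_sub ns m ls p)
  define k where "k = length ls"
  from r_sub.prems obtain G1 G2 M where h: "G = G1 + G2" "rty (econs M G1) m A"
    "rty G2 (rlplug (RBag ns) ls) (TBag M)" by (auto elim: rty_esE)
  from rty_plug_inv[OF h(3)] obtain H C where pl: "rty H (RBag ns) (TBag M)"
    "G2 = (\<lambda>j. H (j + k)) + C"
    "\<And>H' m' A'. rty H' m' A' \<Longrightarrow> (\<forall>i<k. H' i = H i) \<Longrightarrow> rty ((\<lambda>j. H' (j + k)) + C) (rlplug m' ls) A'"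
    unfolding k_def by blast
  have l: "rty (econs M (lenv k 0 G1)) (rlift k 1 m) A" using rty_lift[OF h(2), of k 1] by (simp add: lenv_econs)
  have "rty H (RBag ns) (TBag (econs M (lenv k 0 G1) 0))" using pl(1) by simp
  from rty_subst[OF l this] obtain q where q: "lsub 0 (rlift k 1 m) ns q"
    "rty (rmenv 0 (econs M (lenv k 0 G1)) + lenv 0 0 H) q A" by blast
  from q(2) have "rty (lenv k 0 G1 + H) q A" by (simp only: rmenv0_econs lenv00)
  from pl(3)[OF this] have "rty ((\<lambda>j. (lenv k 0 G1 + H) (j + k)) + C) (rlplug q ls) A"
    by (simp add: lenv0_below)
  moreover have "(\<lambda>j. (lenv k 0 G1 + H) (j + k)) + C = G"
    by (rule ext) (simp add: h(1) pl(2) lenv0_above add_ac)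
  ultimately show ?case using rstep.r_sub[OF r_sub.hyps(1) q(1)[unfolded k_def]] by auto
next
  case (r_sub0 ns m ls)
  from r_sub0.prems obtain G1 G2 M where h: "rty (econs M G1) m A"
    "rty G2 (rlplug (RBag ns) ls) (TBag M)" by (auto elim: rty_esE)
  from rty_plug_inv[OF h(2)] obtain H where "rty H (RBag ns) (TBag M)" by blast
  from rty_bag_size[OF this] have "size M = size ns" by auto
  moreover from rty_occ[OF h(1), of 0] have "size M = occ 0 m" by simp
  ultimately show ?case using r_sub0.hyps by simp
next
  case (c_lam m r)
  from c_lam.prems obtain M B where h: "A = TArr M B" "rty (econs M G) m B" by (auto elim: rty_lamE)
  from c_lam.IH[OF h(2)] obtain m' where "rstep m (Some m')" "rty (econs M G) m' B" by blast
  with rstep.c_lam[of m "Some m'"] rty.t_lam h(1) show ?case by fastforce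
next
  case (c_appl m r n)
  from c_appl.prems obtain G1 G2 M where h: "G = G1 + G2" "rty G1 m (TArr M A)" "rty G2 n (TBag M)"
    by (auto elim: rty_appE)
  from c_appl.IH[OF h(2)] obtain m' where "rstep m (Some m')" "rty G1 m' (TArr M A)" by blast
  with rstep.c_appl[of m "Some m'" n] rty.t_app[OF _ h(3)] h(1) show ?case by fastforce
next
  case (c_appr n r m)
  from c_appr.prems obtain G1 G2 M where h: "G = G1 + G2" "rty G1 m (TArr M A)" "rty G2 n (TBag M)"
    by (auto elim: rty_appE)
  from c_appr.IH[OF h(3)] obtain n' where "rstep n (Some n')" "rty G2 n' (TBag M)" by blast
  with rstep.c_appr[of n "Some n'" m] rty.t_app[OF h(2)] h(1) show ?case by fastforce
next
  case (c_esl m r n)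
  from c_esl.prems obtain G1 G2 M where h: "G = G1 + G2" "rty (econs M G1) m A" "rty G2 n (TBag M)"
    by (auto elim: rty_esE)
  from c_esl.IH[OF h(2)] obtain m' where "rstep m (Some m')" "rty (econs M G1) m' A" by blast
  with rstep.c_esl[of m "Some m'" n] rty.t_es[OF _ h(3)] h(1) show ?case by fastforce
next
  case (c_esr n r m)
  from c_esr.prems obtain G1 G2 M where h: "G = G1 + G2" "rty (econs M G1) m A" "rty G2 n (TBag M)"
    by (auto elim: rty_esE)
  from c_esr.IH[OF h(3)] obtain n' where "rstep n (Some n')" "rty G2 n' (TBag M)" by blast
  with rstep.c_esr[of n "Some n'" m] rty.t_es[OF h(2)] h(1) show ?case by fastforce
next
  case (c_der m r)
  from c_der.prems have "rty G m (TBag {#A#})" by (auto elim: rty_derE)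
  from c_der.IH[OF this] obtain m' where "rstep m (Some m')" "rty G m' (TBag {#A#})" by blast
  with rstep.c_der[of m "Some m'"] rty.t_der show ?case by fastforce
next
  case (c_bag m r ms)
  from rty_bag_split_term[OF c_bag.prems] obtain A1 M G1 G2 where h: "A = TBag (add_mset A1 M)"
    "G = G1 + G2" "rty G1 m A1" "rty G2 (RBag ms) (TBag M)" by blast
  from c_bag.IH[OF h(3)] obtain m' where "rstep m (Some m')" "rty G1 m' A1" by blast
  with rstep.c_bag[of m "Some m'" ms] rty.t_cons[OF _ h(4)] h(1,2) show ?case by fastforce
qed

lemma expansion:
  "rstep m r \<Longrightarrow> r = Some m' \<Longrightarrow> rty G m' A \<Longrightarrow> rty G m A"
proof (induction arbitrary: m' G A rule: rstep.induct)
  case (r_der1 m ls)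
  from r_der1 have "rty G (rlplug m ls) A" by simp
  from rty_plug_inv[OF this] obtain H C where p: "rty H m A"
    "G = (\<lambda>j. H (j + length ls)) + C"
    "\<And>H' m' A'. rty H' m' A' \<Longrightarrow> (\<forall>i<length ls. H' i = H i) \<Longrightarrow> rty ((\<lambda>j. H' (j + length ls)) + C) (rlplug m' ls) A'"
    by blast
  from p(3)[OF rty_bag_single[OF p(1)]] p(2) have "rty G (rlplug (RBag {#m#}) ls) (TBag {#A#})" by simp
  then show ?case by (rule rty.t_der)
next
  case (r_beta m ls n)
  define k where "k = length ls"
  from r_beta have "rty G (rlplug (RES m (rlift k 0 n)) ls) A" by (simp add: k_def)
  from rty_plug_inv[OF this] obtain H C where p: "rty H (RES m (rlift k 0 n)) A"
    "G = (\<lambda>j. H (j + k)) + C"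
    "\<And>H' m' A'. rty H' m' A' \<Longrightarrow> (\<forall>i<k. H' i = H i) \<Longrightarrow> rty ((\<lambda>j. H' (j + k)) + C) (rlplug m' ls) A'"
    unfolding k_def by blast
  from p(1) obtain H1 H2 M where h: "H = H1 + H2" "rty (econs M H1) m A" "rty H2 (rlift k 0 n) (TBag M)"
    by (auto elim: rty_esE)
  from rty_unlift[OF h(3)] obtain D where D: "rty D n (TBag M)" "H2 = lenv k 0 D" by blast
  have "rty H1 (RLam m) (TArr M A)" by (rule rty.t_lam[OF h(2)])
  from p(3)[OF this] have "rty ((\<lambda>j. H1 (j + k)) + C) (rlplug (RLam m) ls) (TArr M A)"
    using h(1) D(2) by (simp add: lenv0_below)
  from rty.t_app[OF this D(1)] have "rty ((\<lambda>j. H1 (j + k)) + C + D) (RApp (rlplug (RLam m) ls) n) A" .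
  moreover have "(\<lambda>j. H1 (j + k)) + C + D = G"
    by (rule ext) (simp add: p(2) h(1) D(2) lenv0_above add_ac)
  ultimately show ?case by simp
next
  case (r_sub ns m ls p)
  define k where "k = length ls"
  from r_sub have "rty G (rlplug p ls) A" by simp
  from rty_plug_inv[OF this] obtain H C where pl: "rty H p A"
    "G = (\<lambda>j. H (j + k)) + C"
    "\<And>H' m' A'. rty H' m' A' \<Longrightarrow> (\<forall>i<k. H' i = H i) \<Longrightarrow> rty ((\<lambda>j. H' (j + k)) + C) (rlplug m' ls) A'"
    unfolding k_def by blast
  from rty_unsubst[OF r_sub.hyps(2) pl(1)] obtain Ga D where u: "rty Ga (rlift k 1 m) A"
    "rty D (RBag ns) (TBag (Ga 0))" "H = rmenv 0 Ga + lenv 0 0 D" unfolding k_def by blast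
  from rty_unlift[OF u(1)] obtain G0 where g: "rty G0 m A" "Ga = lenv k 1 G0" by blast
  define G0t where "G0t = (\<lambda>i. G0 (Suc i))"
  have e: "G0 = econs (G0 0) G0t" unfolding G0t_def by (rule econs_split)
  have Ga: "Ga = econs (G0 0) (lenv k 0 G0t)" using g(2) e by (metis lenv_econs One_nat_def)
  have H: "H = lenv k 0 G0t + D" using u(3) Ga by (simp only: rmenv0_econs lenv00)
  have "rty D (RBag ns) (TBag (G0 0))" using u(2) Ga by simp
  from pl(3)[OF this] have "rty ((\<lambda>j. D (j + k)) + C) (rlplug (RBag ns) ls) (TBag (G0 0))"
    using H by (simp add: lenv0_below)
  moreover from g(1) have "rty (econs (G0 0) G0t) m A" by (simp only: e[symmetric])
  ultimately have "rty (G0t + ((\<lambda>j. D (j + k)) + C)) (RES m (rlplug (RBag ns) ls)) A" using rty.t_es by blast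
  from this have "rty (G0t + ((\<lambda>j. D (j + k)) + C)) (RES m (rlplug (RBag ns) ls)) A" .
  moreover have "G0t + ((\<lambda>j. D (j + k)) + C) = G"
    by (rule ext) (simp add: pl(2) H lenv0_above add_ac)
  ultimately show ?case by simp
next
  case (c_lam m r)
  then obtain m1 where r: "r = Some m1" "m' = RLam m1" by auto
  from c_lam.prems r obtain M B where h: "A = TArr M B" "rty (econs M G) m1 B" by (auto elim: rty_lamE)
  from c_lam.IH[OF r(1) h(2)] h(1) rty.t_lam show ?case by blast
next
  case (c_appl m r n)
  then obtain m1 where r: "r = Some m1" "m' = RApp m1 n" by auto
  from c_appl.prems r obtain G1 G2 M where h: "G = G1 + G2" "rty G1 m1 (TArr M A)" "rty G2 n (TBag M)"
    by (auto elim: rty_appE)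
  from rty.t_app[OF c_appl.IH[OF r(1) h(2)] h(3)] show ?case unfolding h(1) .
next
  case (c_appr n r m)
  then obtain n1 where r: "r = Some n1" "m' = RApp m n1" by auto
  from c_appr.prems r obtain G1 G2 M where h: "G = G1 + G2" "rty G1 m (TArr M A)" "rty G2 n1 (TBag M)"
    by (auto elim: rty_appE)
  from rty.t_app[OF h(2) c_appr.IH[OF r(1) h(3)]] show ?case unfolding h(1) .
next
  case (c_esl m r n)
  then obtain m1 where r: "r = Some m1" "m' = RES m1 n" by auto
  from c_esl.prems r obtain G1 G2 M where h: "G = G1 + G2" "rty (econs M G1) m1 A" "rty G2 n (TBag M)"
    by (auto elim: rty_esE)
  from rty.t_es[OF c_esl.IH[OF r(1) h(2)] h(3)] show ?case unfolding h(1) .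
next
  case (c_esr n r m)
  then obtain n1 where r: "r = Some n1" "m' = RES m n1" by auto
  from c_esr.prems r obtain G1 G2 M where h: "G = G1 + G2" "rty (econs M G1) m A" "rty G2 n1 (TBag M)"
    by (auto elim: rty_esE)
  from rty.t_es[OF h(2) c_esr.IH[OF r(1) h(3)]] show ?case unfolding h(1) .
next
  case (c_der m r)
  then obtain m1 where r: "r = Some m1" "m' = RDer m1" by auto
  from c_der.prems r have "rty G m1 (TBag {#A#})" by (auto elim: rty_derE)
  from rty.t_der[OF c_der.IH[OF r(1) this]] show ?case .
next
  case (c_bag m r ms)
  then obtain m1 where r: "r = Some m1" "m' = RBag (add_mset m1 ms)" by auto
  from rty_bag_split_term[OF c_bag.prems(2)[unfolded r(2)]] obtain A1 M G1 G2 where h: "A = TBag (add_mset A1 M)"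
    "G = G1 + G2" "rty G1 m1 A1" "rty G2 (RBag ms) (TBag M)" by blast
  from rty.t_cons[OF c_bag.IH[OF r(1) h(3)] h(4)] show ?case unfolding h(1,2) .
qed auto

primrec rsz :: "rterm \<Rightarrow> nat" where
  "rsz (RVar i) = 1"
| "rsz (RLam m) = Suc (rsz m)"
| "rsz (RApp m n) = Suc (rsz m + rsz n)"
| "rsz (RES m n) = Suc (rsz m + rsz n)"
| "rsz (RDer m) = Suc (rsz m)"
| "rsz (RBag ms) = Suc (sum_mset (image_mset rsz ms))"

lemma rsz_lift: "rsz (rlift k c m) = rsz m"
proof (induction m arbitrary: c)
  case (RBag ms)
  then show ?case by (induction ms) auto
qed auto

lemma rsz_plug: "rsz (rlplug m ls) = rsz m + sum_list (map rsz ls) + length ls"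
  by (induction ls rule: rev_induct) auto

lemma rsz_lsub: "lsub d a ns q \<Longrightarrow> rsz q + size ns = rsz a + sum_mset (image_mset rsz ns)"
  by (induction rule: lsub.induct) (auto simp: rsz_lift)

lemma rstep_dec: "rstep m r \<Longrightarrow> r = Some m' \<Longrightarrow> rsz m' < rsz m"
proof (induction arbitrary: m' rule: rstep.induct)
  case (r_sub ns m ls p)
  from rsz_lsub[OF r_sub.hyps(2)] have "rsz p \<le> rsz m + sum_mset (image_mset rsz ns)" by (simp add: rsz_lift)
  then show ?case using r_sub.prems by (auto simp: rsz_plug)
qed (auto simp: rsz_plug rsz_lift)

lemma typed_wn: "rty G m A \<Longrightarrow> \<exists>p. rnormal p \<and> rsteps m p"
proof (induction "rsz m" arbitrary: m A rule: less_induct)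
  case less
  show ?case
  proof (cases "rnormal m")
    case True
    then show ?thesis by (auto simp: rsteps_def)
  next
    case False
    then obtain r where "rstep m r" by (auto simp: rnormal_def)
    from progress[OF this less.prems] obtain m' where m': "rstep m (Some m')" "rty G m' A" by blast
    from rstep_dec[OF m'(1) refl] less.hyps m'(2) obtain p where "rnormal p" "rsteps m' p" by blast
    moreover have "rsteps m p" using m'(1) \<open>rsteps m' p\<close> unfolding rsteps_def
      by (rule converse_rtranclp_into_rtranclp)
    ultimately show ?thesis by blast
  qed
qed



inductive_cases ap_varE: "approx m (Var i)"
inductive_cases ap_lamE: "approx m (Lam M)"
inductive_cases ap_appE: "approx m (App M N)"
inductive_cases ap_esE: "approx m (ES M N)"
inductive_cases ap_derE: "approx m (Der M)"
inductive_cases ap_bangE: "approx m (Bang M)"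

lemma approx_unlift: "approx m (dlift k c N) \<Longrightarrow> \<exists>m0. approx m0 N \<and> m = rlift k c m0"
proof (induction N arbitrary: m c)
  case (Var i)
  then show ?case by (auto elim!: ap_varE intro: approx.a_var split: if_splits)
next
  case (Lam N)
  then show ?case by (fastforce elim!: ap_lamE intro: approx.a_lam)
next
  case (App N1 N2)
  from App.prems obtain a b where "m = RApp a b" "approx a (dlift k c N1)" "approx b (dlift k c N2)"
    by (auto elim: ap_appE)
  with App.IH show ?case by (fastforce intro: approx.a_app)
next
  case (ES N1 N2)
  from ES.prems obtain a b where "m = RES a b" "approx a (dlift k (Suc c) N1)" "approx b (dlift k c N2)"
    by (auto elim: ap_esE)
  with ES.IH show ?case by (fastforce intro: approx.a_es)
next
  case (Der N)
  then show ?case by (fastforce elim!: ap_derE intro: approx.a_der)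
next
  case (Bang N)
  from Bang.prems obtain ms where ms: "m = RBag ms" "\<forall>x\<in>#ms. approx x (dlift k c N)"
    by (auto elim: ap_bangE)
  have "\<exists>ms0. (\<forall>x\<in>#ms0. approx x N) \<and> ms = image_mset (rlift k c) ms0" using ms(2)
  proof (induction ms)
    case empty then show ?case by auto
  next
    case (add x ms)
    from add.prems Bang.IH obtain x0 where "approx x0 N" "x = rlift k c x0" by auto
    moreover from add.IH add.prems obtain ms0 where "\<forall>x\<in>#ms0. approx x N" "ms = image_mset (rlift k c) ms0" by auto
    ultimately show ?case by (rule_tac x="add_mset x0 ms0" in exI) auto
  qed
  then obtain ms0 where "\<forall>x\<in>#ms0. approx x N" "ms = image_mset (rlift k c) ms0" by blast
  then have "approx (RBag ms0) (Bang N)" "m = rlift k c (RBag ms0)" using ms(1) by (auto intro: approx.a_bag)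
  then show ?case by blast
qed

lemma lplug_snoc[simp]: "lplug M (Ls @ [L]) = ES (lplug M Ls) L"
  by (simp add: lplug_def)

lemma lplug_Nil[simp]: "lplug M [] = M"
  by (simp add: lplug_def)

lemma approx_plug: "approx n N \<Longrightarrow> list_all2 approx ls Ls \<Longrightarrow> approx (rlplug n ls) (lplug N Ls)"
proof (induction ls arbitrary: Ls rule: rev_induct)
  case Nil then show ?case by simp
next
  case (snoc l ls)
  then obtain Ls' L where "Ls = Ls' @ [L]" "list_all2 approx ls Ls'" "approx l L"
    by (auto simp: list_all2_append1 list_all2_Cons1)
  with snoc show ?case by (auto intro: approx.a_es)
qed

lemma approx_plug_inv: "approx m (lplug N Ls) \<Longrightarrow> \<exists>n ls. m = rlplug n ls \<and> approx n N \<and> list_all2 approx ls Ls"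
proof (induction Ls arbitrary: m rule: rev_induct)
  case Nil then show ?case by (rule_tac x=m in exI, rule_tac x="[]" in exI) simp
next
  case (snoc L Ls)
  from snoc.prems obtain a b where "m = RES a b" "approx a (lplug N Ls)" "approx b L" by (auto elim: ap_esE)
  with snoc.IH obtain n ls where "a = rlplug n ls" "approx n N" "list_all2 approx ls Ls" by blast
  with \<open>m = RES a b\<close> \<open>approx b L\<close> show ?case
    by (rule_tac x=n in exI, rule_tac x="ls @ [b]" in exI) (auto simp: list_all2_appendI)
qed

lemma approx_unsubst:
  "approx q (dsubst d N M) \<Longrightarrow> \<exists>a ns. approx a M \<and> (\<forall>n\<in>#ns. approx n N) \<and> lsub d a ns q"
proof (induction M arbitrary: d q)
  case (Var i)
  show ?case
  proof (cases "i = d")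
    case True
    with Var have "approx q (dlift d 0 N)" by simp
    from approx_unlift[OF this] obtain n where "approx n N" "q = rlift d 0 n" by blast
    moreover have "lsub d (RVar i) {#n#} (rlift d 0 n)" using True lsub.ls_hit by simp
    moreover have "\<forall>x\<in>#{#n#}. approx x N" using \<open>approx n N\<close> by simp
    ultimately show ?thesis using approx.a_var[of i] \<open>q = rlift d 0 n\<close> by blast
  next
    case False
    with Var have "q = (if d < i then RVar (i - 1) else RVar i)" by (auto elim: ap_varE split: if_splits)
    then have "lsub d (RVar i) {#} q" using lsub.ls_var[OF False] by simp
    moreover have "\<forall>x\<in>#{#}. approx x N" by simp
    ultimately show ?thesis using approx.a_var[of i] by blast
  qed
next
  case (Lam M)
  from Lam.prems obtain q' where q: "q = RLam q'" "approx q' (dsubst (Suc d) N M)" by (auto elim: ap_lamE)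
  from Lam.IH[OF q(2)] obtain a ns where "approx a M" "\<forall>n\<in>#ns. approx n N" "lsub (Suc d) a ns q'" by blast
  then have "approx (RLam a) (Lam M)" "\<forall>n\<in>#ns. approx n N" "lsub d (RLam a) ns q"
    using q(1) approx.a_lam lsub.ls_lam by auto
  then show ?case by blast
next
  case (App M1 M2)
  from App.prems obtain q1 q2 where q: "q = RApp q1 q2" "approx q1 (dsubst d N M1)" "approx q2 (dsubst d N M2)"
    by (auto elim: ap_appE)
  from App.IH(1)[OF q(2)] App.IH(2)[OF q(3)] obtain a1 ns1 a2 ns2 where
    "approx a1 M1" "\<forall>n\<in>#ns1. approx n N" "lsub d a1 ns1 q1"
    "approx a2 M2" "\<forall>n\<in>#ns2. approx n N" "lsub d a2 ns2 q2" by blast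
  then have "approx (RApp a1 a2) (App M1 M2)" "\<forall>n\<in>#ns1 + ns2. approx n N" "lsub d (RApp a1 a2) (ns1 + ns2) q"
    using q(1) by (auto intro: approx.a_app lsub.ls_app)
  then show ?case by blast
next
  case (ES M1 M2)
  from ES.prems obtain q1 q2 where q: "q = RES q1 q2" "approx q1 (dsubst (Suc d) N M1)" "approx q2 (dsubst d N M2)"
    by (auto elim: ap_esE)
  from ES.IH(1)[OF q(2)] ES.IH(2)[OF q(3)] obtain a1 ns1 a2 ns2 where
    "approx a1 M1" "\<forall>n\<in>#ns1. approx n N" "lsub (Suc d) a1 ns1 q1"
    "approx a2 M2" "\<forall>n\<in>#ns2. approx n N" "lsub d a2 ns2 q2" by blast
  then have "approx (RES a1 a2) (ES M1 M2)" "\<forall>n\<in>#ns1 + ns2. approx n N" "lsub d (RES a1 a2) (ns1 + ns2) q"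
    using q(1) by (auto intro: approx.a_es lsub.ls_es)
  then show ?case by blast
next
  case (Der M)
  from Der.prems obtain q' where q: "q = RDer q'" "approx q' (dsubst d N M)" by (auto elim: ap_derE)
  from Der.IH[OF q(2)] obtain a ns where "approx a M" "\<forall>n\<in>#ns. approx n N" "lsub d a ns q'" by blast
  then have "approx (RDer a) (Der M)" "\<forall>n\<in>#ns. approx n N" "lsub d (RDer a) ns q"
    using q(1) approx.a_der lsub.ls_der by auto
  then show ?case by blast
next
  case (Bang M)
  from Bang.prems obtain qs where qs: "q = RBag qs" "\<forall>x\<in>#qs. approx x (dsubst d N M)"
    by (auto elim: ap_bangE)
  have "\<exists>as ns. (\<forall>x\<in>#as. approx x M) \<and> (\<forall>n\<in>#ns. approx n N) \<and> lsub d (RBag as) ns (RBag qs)"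
    using qs(2)
  proof (induction qs)
    case empty
    have "(\<forall>x\<in>#{#}. approx x M) \<and> (\<forall>n\<in>#{#}. approx n N) \<and> lsub d (RBag {#}) {#} (RBag {#})"
      using lsub.ls_nil by simp
    then show ?case by blast
  next
    case (add x qs)
    have "approx x (dsubst d N M)" using add.prems by simp
    from Bang.IH[OF this] obtain a1 ns1 where h1: "approx a1 M" "\<forall>n\<in>#ns1. approx n N" "lsub d a1 ns1 x" by blast
    moreover have "\<forall>x\<in>#qs. approx x (dsubst d N M)" using add.prems by simp
    from add.IH[OF this] obtain as ns where h2: "\<forall>x\<in>#as. approx x M" "\<forall>n\<in>#ns. approx n N"
      "lsub d (RBag as) ns (RBag qs)" by blast
    have "\<forall>x\<in>#add_mset a1 as. approx x M" "\<forall>n\<in>#ns1 + ns. approx n N" using h1 h2 by auto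
    moreover have "lsub d (RBag (add_mset a1 as)) (ns1 + ns) (RBag (add_mset x qs))"
      by (rule lsub.ls_cons[OF h1(3) h2(3)])
    ultimately have "\<forall>x\<in>#add_mset a1 as. approx x M" "\<forall>n\<in>#ns1 + ns. approx n N"
      "lsub d (RBag (add_mset a1 as)) (ns1 + ns) (RBag (add_mset x qs))" by blast+
    then show ?case by blast
  qed
  then obtain as ns where h: "\<forall>x\<in>#as. approx x M" "\<forall>n\<in>#ns. approx n N" "lsub d (RBag as) ns (RBag qs)" by blast
  from approx.a_bag[OF h(1)] h(2,3) qs(1) show ?case by blast
qed

lemma lsub_size: "lsub d a ns q \<Longrightarrow> size ns = occ d a"
  by (induction rule: lsub.induct) auto

lemma occ_lift: "d < c \<Longrightarrow> occ d (rlift k c m) = occ d m"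
proof (induction m arbitrary: d c)
  case (RBag ms)
  then show ?case by (induction ms) auto
qed auto

lemma antisim: "sstep N N' \<Longrightarrow> approx m' N' \<Longrightarrow> \<exists>m. approx m N \<and> rstep m (Some m')"
proof (induction arbitrary: m' rule: sstep.induct)
  case (s_root N N')
  from s_root.hyps s_root.prems show ?case
  proof (cases rule: root.cases)
    case (root_dB M Ls N0)
    from approx_plug_inv[OF s_root.prems[unfolded root_dB(2)]] obtain x ls where
      h: "m' = rlplug x ls" "approx x (ES M (dlift (length Ls) 0 N0))" "list_all2 approx ls Ls" by blast
    from h(2) obtain a b' where x: "x = RES a b'" "approx a M" "approx b' (dlift (length Ls) 0 N0)"
      by (auto elim: ap_esE)
    from approx_unlift[OF x(3)] obtain b where b: "approx b N0" "b' = rlift (length Ls) 0 b" by blast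
    have len: "length ls = length Ls" using h(3) by (rule list_all2_lengthD)
    have "approx (RApp (rlplug (RLam a) ls) b) N"
      unfolding root_dB(1) by (rule approx.a_app[OF approx_plug[OF approx.a_lam[OF x(2)] h(3)] b(1)])
    moreover have "rstep (RApp (rlplug (RLam a) ls) b) (Some m')"
      using rstep.r_beta[of a ls b] h(1) x(1) b(2) len by simp
    ultimately show ?thesis by blast
  next
    case (root_sb M N0 Ls)
    from approx_plug_inv[OF s_root.prems[unfolded root_sb(2)]] obtain x ls where
      h: "m' = rlplug x ls" "approx x (dsubst 0 N0 (dlift (length Ls) 1 M))" "list_all2 approx ls Ls" by blast
    from approx_unsubst[OF h(2)] obtain a ns where a: "approx a (dlift (length Ls) 1 M)"
      "\<forall>n\<in>#ns. approx n N0" "lsub 0 a ns x" by blast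
    from approx_unlift[OF a(1)] obtain a0 where a0: "approx a0 M" "a = rlift (length Ls) 1 a0" by blast
    have len: "length ls = length Ls" using h(3) by (rule list_all2_lengthD)
    have "approx (RES a0 (rlplug (RBag ns) ls)) N"
      unfolding root_sb(1) by (rule approx.a_es[OF a0(1) approx_plug[OF approx.a_bag[OF a(2)] h(3)]])
    moreover have "size ns = occ 0 a0" using lsub_size[OF a(3)] a0(2) occ_lift[of 0 1] by simp
    moreover have "lsub 0 (rlift (length ls) 1 a0) ns x" using a(3) a0(2) len by simp
    ultimately show ?thesis using rstep.r_sub h(1) by blast
  next
    case (root_d N0 Ls)
    from approx_plug_inv[OF s_root.prems[unfolded root_d(2)]] obtain x ls where
      h: "m' = rlplug x ls" "approx x N0" "list_all2 approx ls Ls" by blast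
    have "approx (RBag {#x#}) (Bang N0)" using h(2) by (intro approx.a_bag) simp
    then have "approx (RDer (rlplug (RBag {#x#}) ls)) N"
      unfolding root_d(1) by (rule approx.a_der[OF approx_plug[OF _ h(3)]])
    moreover have "rstep (RDer (rlplug (RBag {#x#}) ls)) (Some m')" using h(1) rstep.r_der1 by simp
    ultimately show ?thesis by blast
  qed
next
  case (s_lam M M')
  from s_lam.prems obtain a' where "m' = RLam a'" "approx a' M'" by (auto elim: ap_lamE)
  with s_lam.IH obtain a where "approx a M" "rstep a (Some a')" by blast
  with \<open>m' = _\<close> approx.a_lam rstep.c_lam[of a "Some a'"] show ?case by fastforce
next
  case (s_appl M M' N)
  from s_appl.prems obtain a' b where "m' = RApp a' b" "approx a' M'" "approx b N" by (auto elim: ap_appE)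
  with s_appl.IH obtain a where "approx a M" "rstep a (Some a')" by blast
  with \<open>m' = _\<close> \<open>approx b N\<close> approx.a_app rstep.c_appl[of a "Some a'" b] show ?case by fastforce
next
  case (s_appr N N' M)
  from s_appr.prems obtain a b' where "m' = RApp a b'" "approx a M" "approx b' N'" by (auto elim: ap_appE)
  with s_appr.IH obtain b where "approx b N" "rstep b (Some b')" by blast
  with \<open>m' = _\<close> \<open>approx a M\<close> approx.a_app rstep.c_appr[of b "Some b'" a] show ?case by fastforce
next
  case (s_esl M M' N)
  from s_esl.prems obtain a' b where "m' = RES a' b" "approx a' M'" "approx b N" by (auto elim: ap_esE)
  with s_esl.IH obtain a where "approx a M" "rstep a (Some a')" by blast
  with \<open>m' = _\<close> \<open>approx b N\<close> approx.a_es rstep.c_esl[of a "Some a'" b] show ?case by fastforce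
next
  case (s_esr N N' M)
  from s_esr.prems obtain a b' where "m' = RES a b'" "approx a M" "approx b' N'" by (auto elim: ap_esE)
  with s_esr.IH obtain b where "approx b N" "rstep b (Some b')" by blast
  with \<open>m' = _\<close> \<open>approx a M\<close> approx.a_es rstep.c_esr[of b "Some b'" a] show ?case by fastforce
next
  case (s_der M M')
  from s_der.prems obtain a' where "m' = RDer a'" "approx a' M'" by (auto elim: ap_derE)
  with s_der.IH obtain a where "approx a M" "rstep a (Some a')" by blast
  with \<open>m' = _\<close> approx.a_der rstep.c_der[of a "Some a'"] show ?case by fastforce
qed

lemma antisim_star:
  assumes "sstep\<^sup>*\<^sup>* N N'" "approx m' N'" "rty G m' A"
  shows "\<exists>m. approx m N \<and> rty G m A"
  using assms(1)
proof (induction rule: converse_rtranclp_induct)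
  case base then show ?case using assms(2,3) by blast
next
  case (step y z)
  from step.IH obtain mz where "approx mz z" "rty G mz A" by blast
  from antisim[OF step.hyps(1) this(1)] obtain m where "approx m y" "rstep m (Some mz)" by blast
  with expansion[OF this(2) refl \<open>rty G mz A\<close>] show ?case by blast
qed



lemma comp_single_inj: "inj \<rho> \<Longrightarrow> single (\<rho> i) A \<circ> \<rho> = single i A"
  by (rule ext) (auto simp: single_def inj_eq)

lemma comp_econs: "econs M G \<circ> case_nat 0 (\<lambda>i. Suc (\<rho> i)) = econs M (G \<circ> \<rho>)"
  by (rule ext) (simp add: econs_def split: nat.split)

lemma comp_add: "(G + D) \<circ> \<rho> = (G \<circ> \<rho>) + (D \<circ> \<rho>)"
  by (rule ext) simp

lemma comp_zero: "(0::env) \<circ> \<rho> = 0"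
  by (rule ext) simp

lemma inj_shift: "inj \<rho> \<Longrightarrow> inj (case_nat 0 (\<lambda>i. Suc (\<rho> i)))"
  by (auto simp: inj_def split: nat.splits)

lemma approx_dren:
  "approx m (dren \<rho> M) \<Longrightarrow> rty G m A \<Longrightarrow> inj \<rho> \<Longrightarrow> \<exists>m0. approx m0 M \<and> rty (G \<circ> \<rho>) m0 A"
proof (induction M arbitrary: \<rho> m G A)
  case (Var i)
  then have "m = RVar (\<rho> i)" by (auto elim: ap_varE)
  with Var.prems have "G = single (\<rho> i) A" by (auto elim: rty_varE)
  then have "G \<circ> \<rho> = single i A" using comp_single_inj[OF Var.prems(3)] by simp
  then show ?case using approx.a_var rty.t_var by metis
next
  case (Lam M)
  from Lam.prems obtain a where a: "m = RLam a" "approx a (dren (case_nat 0 (\<lambda>i. Suc (\<rho> i))) M)"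
    by (auto elim: ap_lamE)
  from Lam.prems(2) a(1) obtain M' B where h: "A = TArr M' B" "rty (econs M' G) a B" by (auto elim: rty_lamE)
  from Lam.IH[OF a(2) h(2) inj_shift[OF Lam.prems(3)]] obtain m0 where
    "approx m0 M" "rty (econs M' G \<circ> case_nat 0 (\<lambda>i. Suc (\<rho> i))) m0 B" by blast
  then have "approx (RLam m0) (Lam M)" "rty (G \<circ> \<rho>) (RLam m0) A"
    using h(1) by (auto simp: comp_econs intro: approx.a_lam rty.t_lam)
  then show ?case by blast
next
  case (App M1 M2)
  from App.prems obtain a b where a: "m = RApp a b" "approx a (dren \<rho> M1)" "approx b (dren \<rho> M2)"
    by (auto elim: ap_appE)
  from App.prems(2) a(1) obtain G1 G2 M' where h: "G = G1 + G2" "rty G1 a (TArr M' A)" "rty G2 b (TBag M')"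
    by (auto elim: rty_appE)
  from App.IH(1)[OF a(2) h(2) App.prems(3)] obtain a0 where a0: "approx a0 M1" "rty (G1 \<circ> \<rho>) a0 (TArr M' A)" by blast
  from App.IH(2)[OF a(3) h(3) App.prems(3)] obtain b0 where b0: "approx b0 M2" "rty (G2 \<circ> \<rho>) b0 (TBag M')" by blast
  have "rty (G \<circ> \<rho>) (RApp a0 b0) A" unfolding h(1) comp_add by (rule rty.t_app[OF a0(2) b0(2)])
  with approx.a_app[OF a0(1) b0(1)] show ?case by blast
next
  case (ES M1 M2)
  from ES.prems obtain a b where a: "m = RES a b" "approx a (dren (case_nat 0 (\<lambda>i. Suc (\<rho> i))) M1)" "approx b (dren \<rho> M2)"
    by (auto elim: ap_esE)
  from ES.prems(2) a(1) obtain G1 G2 M' where h: "G = G1 + G2" "rty (econs M' G1) a A" "rty G2 b (TBag M')"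
    by (auto elim: rty_esE)
  from ES.IH(1)[OF a(2) h(2) inj_shift[OF ES.prems(3)]] obtain a0 where a0: "approx a0 M1"
    "rty (econs M' G1 \<circ> case_nat 0 (\<lambda>i. Suc (\<rho> i))) a0 A" by blast
  from ES.IH(2)[OF a(3) h(3) ES.prems(3)] obtain b0 where b0: "approx b0 M2" "rty (G2 \<circ> \<rho>) b0 (TBag M')" by blast
  have a1: "rty (econs M' (G1 \<circ> \<rho>)) a0 A" using a0(2) by (simp only: comp_econs)
  have "rty (G \<circ> \<rho>) (RES a0 b0) A" unfolding h(1) comp_add by (rule rty.t_es[OF a1 b0(2)])
  with approx.a_es[OF a0(1) b0(1)] show ?case by blast
next
  case (Der M)
  from Der.prems obtain a where a: "m = RDer a" "approx a (dren \<rho> M)" by (auto elim: ap_derE)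
  from Der.prems(2) a(1) have "rty G a (TBag {#A#})" by (auto elim: rty_derE)
  from Der.IH[OF a(2) this Der.prems(3)] obtain a0 where "approx a0 M" "rty (G \<circ> \<rho>) a0 (TBag {#A#})" by blast
  with approx.a_der rty.t_der show ?case by blast
next
  case (Bang M)
  from Bang.prems obtain ms where ms: "m = RBag ms" "\<forall>x\<in>#ms. approx x (dren \<rho> M)" by (auto elim: ap_bangE)
  have "\<And>G A. rty G (RBag ms) A \<Longrightarrow> \<exists>ms0. (\<forall>x\<in>#ms0. approx x M) \<and> rty (G \<circ> \<rho>) (RBag ms0) A"
    using ms(2)
  proof (induction ms)
    case empty
    then have "G = 0" "A = TBag {#}" by (auto elim: rty_bagE)
    then have "(\<forall>x\<in>#{#}. approx x M) \<and> rty (G \<circ> \<rho>) (RBag {#}) A" using rty.t_nil by (simp add: comp_zero)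
    then show ?case by blast
  next
    case (add x ms)
    from rty_bag_split_term[OF add.prems(1)] obtain A1 M' G1 G2 where h: "A = TBag (add_mset A1 M')"
      "G = G1 + G2" "rty G1 x A1" "rty G2 (RBag ms) (TBag M')" by blast
    have "approx x (dren \<rho> M)" using add.prems(2) by simp
    from Bang.IH[OF this h(3) Bang.prems(3)] obtain x0 where x0: "approx x0 M" "rty (G1 \<circ> \<rho>) x0 A1" by blast
    have "\<forall>x\<in>#ms. approx x (dren \<rho> M)" using add.prems(2) by simp
    from add.IH[OF h(4) this] obtain ms0 where m0: "\<forall>x\<in>#ms0. approx x M" "rty (G2 \<circ> \<rho>) (RBag ms0) (TBag M')" by blast
    have "rty (G \<circ> \<rho>) (RBag (add_mset x0 ms0)) A" unfolding h(1,2) comp_add by (rule rty.t_cons[OF x0(2) m0(2)])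
    moreover have "\<forall>x\<in>#add_mset x0 ms0. approx x M" using x0(1) m0(1) by simp
    ultimately show ?case by blast
  qed
  from this[OF Bang.prems(2)[unfolded ms(1)]] obtain ms0 where "\<forall>x\<in>#ms0. approx x M" "rty (G \<circ> \<rho>) (RBag ms0) A" by blast
  with approx.a_bag show ?case by blast
qed

lemma approx_tplug: "approx m (tplug T N) \<Longrightarrow> rty G m A \<Longrightarrow> \<exists>m0 G0 A0. approx m0 N \<and> rty G0 m0 A0"
proof (induction T arbitrary: m G A)
  case THole then show ?case by auto
next
  case (TApp T N1)
  from TApp.prems obtain a b where "m = RApp a b" "approx a (tplug T N)" by (auto elim: ap_appE)
  with TApp.prems(2) obtain G1 M B where "rty G1 a B" by (auto elim: rty_appE)
  with TApp.IH \<open>approx a _\<close> show ?case by blast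
next
  case (TLamApp T N1)
  from TLamApp.prems obtain a b where "m = RApp (RLam a) b" "approx a (tplug T N)"
    by (auto elim!: ap_appE ap_lamE)
  with TLamApp.prems(2) obtain G1 B where "rty G1 a B" by (auto elim!: rty_appE rty_lamE)
  with TLamApp.IH \<open>approx a _\<close> show ?case by blast
qed

theorem mainTheorem5:
  fixes M :: dterm
  assumes "meaningful M"
  shows "nf_taylor M \<noteq> {}"
proof -
  from assms obtain T \<rho> P where h: "inj \<rho>" "sstep\<^sup>*\<^sup>* (tplug T (dren \<rho> M)) (Bang P)"
    unfolding meaningful_def by blast
  have "approx (RBag {#}) (Bang P)" by (rule approx.a_bag) simp
  from antisim_star[OF h(2) this rty.t_nil] obtain m where "approx m (tplug T (dren \<rho> M))" "rty 0 m (TBag {#})"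
    by blast
  from approx_tplug[OF this] obtain m1 G1 A1 where "approx m1 (dren \<rho> M)" "rty G1 m1 A1" by blast
  from approx_dren[OF this h(1)] obtain m0 where m0: "approx m0 M" "rty (G1 \<circ> \<rho>) m0 A1" by blast
  from typed_wn[OF m0(2)] obtain p where "rnormal p" "rsteps m0 p" by blast
  then have "p \<in> nf_taylor M" using m0(1) by (auto simp: nf_taylor_def taylor_def)
  then show ?thesis by blast
qed


end
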